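(* Consider a Why Query with the \texttt{SUM} aggregate, an attribute $X$ with filters $p_1,\dots,p_m$, a threshold $\varepsilon$, and a canonical predicate $P^C$. Then for every nonempty $P\subsetneq P^C$, $P$ is an actual cause and $\overline{P}=P^C\setminus P$ is a valid contingency for $P$, i.e. $\Delta(D-D_{\overline{P}}-D_P)\le\varepsilon<\Delta(D-D_{\overline{P}})$.
   Context: $D$ is a finite table of rows; $M$ is a numerical column; $s_1,s_2$ are disjoint sets of rows (sibling subspaces). $X$ is a categorical column with values $x_1,\dots,x_m$; filter $p_i$ is the condition $X=x_i$. A predicate is $P\subseteq\{p_1,\dots,p_m\}$, $D_P$ the set of rows whose $X$-value is in $P$; $D'-D''$ is set difference. For $D'\subseteq D$, $\Delta(D')=\sum_{t\in D'\cap s_1}t[M]-\sum_{t\in D'\cap s_2}t[M]$; $\Delta_i=\Delta(D_{p_i})$; $\Delta(D)>0$. $P$ is an actual cause if there is $\Gamma\subseteq\{p_1,\dots,p_m\}$ with $\Gamma\cap P=\emptyset$ (a valid contingency) such that $\Delta(D-D_\Gamma-D_P)\le\varepsilon<\Delta(D-D_\Gamma)$. Canonical predicate: order the filters so that $\Delta_1\ge\cdots\ge\Delta_m$ and let $j$ satisfy $\Delta(D)-\sum_{i=1}^{j}\Delta_i\le\varepsilon<\Delta(D)-\sum_{i=1}^{j-1}\Delta_i$; then $P^C=\{p_1,\dots,p_j\}$. *)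

theory Defs
  imports Complex_Main
begin

text \<open>Rows have type 'r, M :: 'r => real is the numerical column, X :: 'r => 'v the
categorical column, with values x 1, ..., x m. The filter p_i (X = x_i) is represented
by its index i in {1..m}; a predicate is a set of indices.\<close>

definition Dsel :: "('r \<Rightarrow> 'v) \<Rightarrow> (nat \<Rightarrow> 'v) \<Rightarrow> 'r set \<Rightarrow> nat set \<Rightarrow> 'r set" where
  "Dsel X x D P = {t \<in> D. \<exists>i\<in>P. X t = x i}"

definition Delta :: "('r \<Rightarrow> real) \<Rightarrow> 'r set \<Rightarrow> 'r set \<Rightarrow> 'r set \<Rightarrow> real" where
  "Delta M s1 s2 D' = (\<Sum>t\<in>D' \<inter> s1. M t) - (\<Sum>t\<in>D' \<inter> s2. M t)"

definition valid_contingency ::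
  "('r \<Rightarrow> real) \<Rightarrow> 'r set \<Rightarrow> 'r set \<Rightarrow> ('r \<Rightarrow> 'v) \<Rightarrow> (nat \<Rightarrow> 'v) \<Rightarrow> nat \<Rightarrow> 'r set
    \<Rightarrow> real \<Rightarrow> nat set \<Rightarrow> nat set \<Rightarrow> bool" where
  "valid_contingency M s1 s2 X x m D \<epsilon> \<Gamma> P \<longleftrightarrow>
     \<Gamma> \<subseteq> {1..m} \<and> \<Gamma> \<inter> P = {} \<and>
     Delta M s1 s2 (D - Dsel X x D \<Gamma> - Dsel X x D P) \<le> \<epsilon> \<and>
     \<epsilon> < Delta M s1 s2 (D - Dsel X x D \<Gamma>)"

definition actual_cause ::
  "('r \<Rightarrow> real) \<Rightarrow> 'r set \<Rightarrow> 'r set \<Rightarrow> ('r \<Rightarrow> 'v) \<Rightarrow> (nat \<Rightarrow> 'v) \<Rightarrow> nat \<Rightarrow> 'r set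
    \<Rightarrow> real \<Rightarrow> nat set \<Rightarrow> bool" where
  "actual_cause M s1 s2 X x m D \<epsilon> P \<longleftrightarrow>
     (\<exists>\<Gamma>. valid_contingency M s1 s2 X x m D \<epsilon> \<Gamma> P)"

definition canonical_predicate ::
  "('r \<Rightarrow> real) \<Rightarrow> 'r set \<Rightarrow> 'r set \<Rightarrow> ('r \<Rightarrow> 'v) \<Rightarrow> (nat \<Rightarrow> 'v) \<Rightarrow> nat \<Rightarrow> 'r set
    \<Rightarrow> real \<Rightarrow> nat set \<Rightarrow> bool" where
  "canonical_predicate M s1 s2 X x m D \<epsilon> PC \<longleftrightarrow>
     (\<exists>\<sigma> j. bij_betw \<sigma> {1..m} {1..m} \<and>
        (\<forall>a b. 1 \<le> a \<and> a \<le> b \<and> b \<le> m \<longrightarrow>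
           Delta M s1 s2 (Dsel X x D {\<sigma> b}) \<le> Delta M s1 s2 (Dsel X x D {\<sigma> a})) \<and>
        j \<in> {1..m} \<and>
        Delta M s1 s2 D - (\<Sum>i=1..j. Delta M s1 s2 (Dsel X x D {\<sigma> i})) \<le> \<epsilon> \<and>
        \<epsilon> < Delta M s1 s2 D - (\<Sum>i=1..<j. Delta M s1 s2 (Dsel X x D {\<sigma> i})) \<and>
        PC = \<sigma> ` {1..j})"

end

theory Submission
  imports Defs
begin

lemma Delta_union:
  assumes "finite A" "finite B" "A \<inter> B = {}"
  shows "Delta M s1 s2 (A \<union> B) = Delta M s1 s2 A + Delta M s1 s2 B"
proof -
  have "(A \<union> B) \<inter> s1 = A \<inter> s1 \<union> B \<inter> s1" "(A \<union> B) \<inter> s2 = A \<inter> s2 \<union> B \<inter> s2" by auto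
  moreover have "(\<Sum>t\<in>A \<inter> s1 \<union> B \<inter> s1. M t) = (\<Sum>t\<in>A \<inter> s1. M t) + (\<Sum>t\<in>B \<inter> s1. M t)"
    using assms by (intro sum.union_disjoint) auto
  moreover have "(\<Sum>t\<in>A \<inter> s2 \<union> B \<inter> s2. M t) = (\<Sum>t\<in>A \<inter> s2. M t) + (\<Sum>t\<in>B \<inter> s2. M t)"
    using assms by (intro sum.union_disjoint) auto
  ultimately show ?thesis unfolding Delta_def by simp
qed

lemma Delta_diff:
  assumes "finite D" "A \<subseteq> D"
  shows "Delta M s1 s2 (D - A) = Delta M s1 s2 D - Delta M s1 s2 A"
proof -
  have "D = (D - A) \<union> A" using assms by auto
  then have "Delta M s1 s2 D = Delta M s1 s2 (D - A) + Delta M s1 s2 A"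
    using assms Delta_union[of "D - A" A M s1 s2] finite_subset[OF assms(2) assms(1)] by auto
  then show ?thesis by simp
qed

lemma Delta_Dsel:
  assumes "finite D" "inj_on x {1..m}" "finite G" "G \<subseteq> {1..m}"
  shows "Delta M s1 s2 (Dsel X x D G) = (\<Sum>i\<in>G. Delta M s1 s2 (Dsel X x D {i}))"
  using assms(3,4)
proof (induction G rule: finite_induct)
  case empty
  then show ?case by (simp add: Dsel_def Delta_def)
next
  case (insert i G)
  have eq: "Dsel X x D (insert i G) = Dsel X x D {i} \<union> Dsel X x D G"
    unfolding Dsel_def by auto
  have disj: "Dsel X x D {i} \<inter> Dsel X x D G = {}"
  proof -
    { fix t k assume "t \<in> D" "X t = x i" "k \<in> G" "X t = x k"
      then have "x i = x k" by simp
      then have "i = k" using assms(2) insert.prems \<open>k \<in> G\<close> by (auto dest: inj_onD)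
      then have False using insert.hyps \<open>k \<in> G\<close> by simp }
    then show ?thesis unfolding Dsel_def by blast
  qed
  have fin: "finite (Dsel X x D S)" for S unfolding Dsel_def using assms(1) by simp
  have "Delta M s1 s2 (Dsel X x D (insert i G)) = Delta M s1 s2 (Dsel X x D {i}) + Delta M s1 s2 (Dsel X x D G)"
    unfolding eq by (rule Delta_union[OF fin fin disj])
  also have "Delta M s1 s2 (Dsel X x D G) = (\<Sum>i\<in>G. Delta M s1 s2 (Dsel X x D {i}))"
    using insert.IH insert.prems by simp
  finally show ?case using insert.hyps by (simp add: sum.insert)
qed

theorem theorem3p17:
  fixes D s1 s2 :: "'r set" and M :: "'r \<Rightarrow> real" and X :: "'r \<Rightarrow> 'v"
    and x :: "nat \<Rightarrow> 'v" and m :: nat and \<epsilon> :: real and PC P :: "nat set"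
  assumes "finite D"
    and "s1 \<inter> s2 = {}"
    and "inj_on x {1..m}"
    and "\<forall>t\<in>D. X t \<in> x ` {1..m}"
    and "Delta M s1 s2 D > 0"
    and "canonical_predicate M s1 s2 X x m D \<epsilon> PC"
    and "P \<noteq> {}" and "P \<subset> PC"
  shows "actual_cause M s1 s2 X x m D \<epsilon> P \<and>
         valid_contingency M s1 s2 X x m D \<epsilon> (PC - P) P"
proof -
  obtain \<sigma> j where bij: "bij_betw \<sigma> {1..m} {1..m}"
    and mono: "\<forall>a b. 1 \<le> a \<and> a \<le> b \<and> b \<le> m \<longrightarrow>
           Delta M s1 s2 (Dsel X x D {\<sigma> b}) \<le> Delta M s1 s2 (Dsel X x D {\<sigma> a})"
    and j: "j \<in> {1..m}"
    and c1: "Delta M s1 s2 D - (\<Sum>i=1..j. Delta M s1 s2 (Dsel X x D {\<sigma> i})) \<le> \<epsilon>"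
    and c2: "\<epsilon> < Delta M s1 s2 D - (\<Sum>i=1..<j. Delta M s1 s2 (Dsel X x D {\<sigma> i}))"
    and PC: "PC = \<sigma> ` {1..j}"
    using assms(6) unfolding canonical_predicate_def by blast
  define d where "d i = Delta M s1 s2 (Dsel X x D {\<sigma> i})" for i
  define De where "De G = Delta M s1 s2 (Dsel X x D G)" for G
  have injj: "inj_on \<sigma> {1..j}" proof -
    have "{1..j} \<subseteq> {1..m}" using j by auto
    then show ?thesis using bij unfolding bij_betw_def by (blast intro: inj_on_subset)
  qed
  have PCsub: "PC \<subseteq> {1..m}" proof -
    have "{1..j} \<subseteq> {1..m}" using j by auto
    then have "\<sigma> ` {1..j} \<subseteq> \<sigma> ` {1..m}" by (rule image_mono)
    then show ?thesis using PC bij unfolding bij_betw_def by simp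
  qed
  have sub: "Dsel X x D G \<subseteq> D" for G unfolding Dsel_def by auto
  have DeG: "De G = (\<Sum>i\<in>G. Delta M s1 s2 (Dsel X x D {i}))" if "G \<subseteq> {1..m}" for G
    unfolding De_def using Delta_Dsel[OF assms(1) assms(3) finite_subset[OF that] that] by simp
  have sumS: "(\<Sum>i\<in>\<sigma> ` A. Delta M s1 s2 (Dsel X x D {i})) = (\<Sum>i\<in>A. d i)" if "A \<subseteq> {1..j}" for A
    unfolding d_def using sum.reindex[OF inj_on_subset[OF injj that]] by simp
  have jset: "{1..j} = insert j {1..<j}" using j by auto
  have split_j: "(\<Sum>i=1..j. d i) = (\<Sum>i=1..<j. d i) + d j"
    unfolding jset by (subst sum.insert) auto
  have sjpos: "d j > 0"
  proof -
    have "(\<Sum>i=1..j. d i) = (\<Sum>i=1..<j. d i) + d j" using j split_j by simp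
    then show ?thesis using c1 c2 unfolding d_def by simp
  qed
  have dpos: "d i > 0" if "i \<in> {1..j}" for i
    proof -
    have "d j \<le> d i" unfolding d_def using that j by (intro mono[rule_format]) simp
    then show ?thesis using sjpos by simp
  qed
  have e1: "D - Dsel X x D (PC - P) - Dsel X x D P = D - Dsel X x D PC"
    using assms(8) unfolding Dsel_def by auto
  have v1: "Delta M s1 s2 (D - Dsel X x D (PC - P) - Dsel X x D P) \<le> \<epsilon>"
  proof -
    have "Delta M s1 s2 (D - Dsel X x D PC) = Delta M s1 s2 D - De PC"
      using Delta_diff[OF assms(1) sub] De_def by simp
    also have "De PC = (\<Sum>i=1..j. d i)" using DeG[OF PCsub] sumS[of "{1..j}"] PC by simp
    finally show ?thesis using e1 c1 d_def by simp
  qed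
  define A where "A = {i\<in>{1..j}. \<sigma> i \<notin> P}"
  have Asub: "A \<subseteq> {1..j}" unfolding A_def by auto
  have PCP: "PC - P = \<sigma> ` A" unfolding A_def PC by auto
  obtain p where "p \<in> P" using assms(7) by auto
  then have "p \<in> \<sigma> ` {1..j}" using assms(8) PC by blast
  then obtain l where l: "l \<in> {1..j}" "\<sigma> l = p" by blast
  have lA: "l \<notin> A" unfolding A_def using l \<open>p \<in> P\<close> by auto
  have "(\<Sum>i\<in>A. d i) \<le> (\<Sum>i\<in>{1..j} - {l}. d i)"
    using Asub lA dpos by (intro sum_mono2) (auto intro: less_imp_le)
  also have "\<dots> = (\<Sum>i=1..j. d i) - d l" using l by (simp add: sum_diff1)
  also have "\<dots> \<le> (\<Sum>i=1..j. d i) - d j" proof -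
    have "d j \<le> d l" unfolding d_def using l j by (intro mono[rule_format]) simp
    then show ?thesis by simp
  qed
  also have "\<dots> = (\<Sum>i=1..<j. d i)" using split_j by simp
  finally have ineq: "(\<Sum>i\<in>A. d i) \<le> (\<Sum>i=1..<j. d i)" .
  have v2: "\<epsilon> < Delta M s1 s2 (D - Dsel X x D (PC - P))"
  proof -
    have "Delta M s1 s2 (D - Dsel X x D (PC - P)) = Delta M s1 s2 D - De (PC - P)"
      using Delta_diff[OF assms(1) sub] De_def by simp
    also have "De (PC - P) = (\<Sum>i\<in>A. d i)" using DeG[of "PC - P"] PCsub sumS[OF Asub] PCP by auto
    finally show ?thesis using ineq c2 d_def by simp
  qed
  have vc: "valid_contingency M s1 s2 X x m D \<epsilon> (PC - P) P"
    unfolding valid_contingency_def using v1 v2 PCsub by auto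
  then show ?thesis unfolding actual_cause_def by blast
qed

end
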